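(* Let $A\xrightarrow{\phi}B\to C\to D$ be an exact sequence of finitely generated $\mathbb Z$-modules, and let $Q$ be the cokernel of the map $\phi_{\mathrm{free}}:A_{\mathrm{free}}\to B_{\mathrm{free}}$ induced by $\phi$. Then \[ |C_{\mathrm{tors}}|\le |Q_{\mathrm{tors}}|\cdot|B_{\mathrm{tors}}|\cdot|D_{\mathrm{tors}}|. \]
   Context: For a finitely generated $\mathbb Z$-module $M$, $M_{\mathrm{tors}}$ is its torsion submodule and $M_{\mathrm{free}}=M/M_{\mathrm{tors}}$. *)

theory Defs
  imports "HOL-Algebra.Algebra"
begin

text \<open>Finitely generated Z-modules are modelled as finitely generated commutative
  groups (HOL-Algebra, multiplicative notation).\<close>

definition fin_gen :: "('a, 'm) monoid_scheme \<Rightarrow> bool" where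
  "fin_gen G \<longleftrightarrow> (\<exists>S. finite S \<and> S \<subseteq> carrier G \<and> generate G S = carrier G)"

definition tors :: "('a, 'm) monoid_scheme \<Rightarrow> 'a set" where
  "tors G = {x \<in> carrier G. \<exists>n::nat. n > 0 \<and> x [^]\<^bsub>G\<^esub> n = \<one>\<^bsub>G\<^esub>}"

definition free_part :: "('a, 'm) monoid_scheme \<Rightarrow> ('a set) monoid" where
  "free_part G = G Mod (tors G)"

text \<open>The map induced on free parts by f: the coset X is sent to the coset of f x
  for x in X (well defined since homomorphisms preserve torsion).\<close>
definition free_map :: "('a, 'm) monoid_scheme \<Rightarrow> ('b, 'n) monoid_scheme \<Rightarrow> ('a \<Rightarrow> 'b) \<Rightarrow> 'a set \<Rightarrow> 'b set" where
  "free_map G H f Y = \<Union> ((\<lambda>y. r_coset H (tors H) (f y)) ` Y)"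

definition coker :: "('a, 'm) monoid_scheme \<Rightarrow> ('b, 'n) monoid_scheme \<Rightarrow> ('a \<Rightarrow> 'b) \<Rightarrow> ('b set) monoid" where
  "coker G H f = H Mod (f ` carrier G)"

end

theory Submission
  imports Defs
begin


lemma count_le:
  assumes "finite Y" "f ` XX \<subseteq> Y" "finite Z"
    and fib: "\<And>x x'. x \<in> XX \<Longrightarrow> x' \<in> XX \<Longrightarrow> f x = f x' \<Longrightarrow> x' \<in> h x ` Z"
  shows "card XX \<le> card Z * card Y"
proof -
  define rep where "rep y = (SOME x. x \<in> XX \<and> f x = y)" for y
  have rep: "rep y \<in> XX \<and> f (rep y) = y" if "y \<in> f ` XX" for y
    using that unfolding rep_def by (metis (mono_tags, lifting) imageE someI)
  have fin: "finite (f ` XX)" using assms(1,2) finite_subset by blast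
  have sub: "XX \<subseteq> (\<Union>y\<in>f ` XX. h (rep y) ` Z)"
  proof
    fix x assume x: "x \<in> XX"
    then have "f x \<in> f ` XX" by blast
    from rep[OF this] have "x \<in> h (rep (f x)) ` Z" using fib x by metis
    then show "x \<in> (\<Union>y\<in>f ` XX. h (rep y) ` Z)" using x by blast
  qed
  have finU: "finite (\<Union>y\<in>f ` XX. h (rep y) ` Z)"
    by (rule finite_UN_I[OF fin]) (simp add: assms(3))
  have "card XX \<le> card (\<Union>y\<in>f ` XX. h (rep y) ` Z)"
    by (rule card_mono[OF finU sub])
  also have "\<dots> \<le> (\<Sum>y\<in>f ` XX. card (h (rep y) ` Z))" by (rule card_UN_le[OF fin])
  also have "\<dots> \<le> (\<Sum>y\<in>f ` XX. card Z)" by (intro sum_mono card_image_le assms(3))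
  also have "\<dots> = card Z * card (f ` XX)" by simp
  also have "\<dots> \<le> card Z * card Y" using assms(1,2) by (simp add: card_mono)
  finally show ?thesis .
qed

lemma tors_carrier: "tors G \<subseteq> carrier G" unfolding tors_def by auto

lemma (in comm_group) tors_subgroup: "subgroup (tors G) G"
proof (rule subgroupI)
  show "tors G \<subseteq> carrier G" by (rule tors_carrier)
  have "\<one> \<in> tors G" unfolding tors_def by (auto intro!: exI[of _ "1::nat"])
  then show "tors G \<noteq> {}" by blast
next
  fix a assume "a \<in> tors G"
  then obtain n :: nat where "n > 0" "a [^] n = \<one>" "a \<in> carrier G" unfolding tors_def by auto
  then show "inv a \<in> tors G" unfolding tors_def by (auto simp: nat_pow_inv)
next
  fix a b assume "a \<in> tors G" "b \<in> tors G"
  then obtain n m :: nat where "n > 0" "a [^] n = \<one>" "a \<in> carrier G"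
     "m > 0" "b [^] m = \<one>" "b \<in> carrier G" unfolding tors_def by auto
  moreover have e1: "a [^] (n*m) = \<one>" using calculation nat_pow_pow[of a n m] by simp
  moreover have e2: "b [^] (n*m) = \<one>" using calculation nat_pow_pow[of b m n] by (simp add: mult.commute)
  moreover have "(a \<otimes> b) [^] (n*m) = \<one>" using calculation by (simp add: nat_pow_distrib)
  ultimately show "a \<otimes> b \<in> tors G" unfolding tors_def
    by (auto intro!: exI[of _ "n*m"])
qed

lemma (in comm_group) gen_insert:
  assumes g: "g \<in> carrier G" and S: "S \<subseteq> carrier G"
  shows "generate G (insert g S) \<subseteq> {g [^] (k::int) \<otimes> y | k y. y \<in> generate G S}"
    (is "_ \<subseteq> ?R")
proof (rule generate_subgroup_incl)
  have H: "subgroup (generate G S) G" by (rule generate_is_subgroup[OF S])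
  have Hc: "generate G S \<subseteq> carrier G" using H subgroup.subset by blast
  show "insert g S \<subseteq> ?R"
  proof
    fix x assume "x \<in> insert g S"
    then show "x \<in> ?R"
    proof
      assume "x = g" then show ?thesis using g subgroup.one_closed[OF H]
        by (auto intro!: exI[of _ "1::int"] exI[of _ "\<one>"])
    next
      assume "x \<in> S" then show ?thesis using S generate.incl[of x S G]
        by (auto intro!: exI[of _ "0::int"] exI[of _ x])
    qed
  qed
  show "subgroup ?R G"
  proof (rule subgroupI)
    show "?R \<subseteq> carrier G" using Hc g by auto
    show "?R \<noteq> {}" using subgroup.one_closed[OF H] by blast
  next
    fix a assume "a \<in> ?R"
    then obtain k y where a: "a = g [^] (k::int) \<otimes> y" "y \<in> generate G S" by auto
    then have "inv a = g [^] (-k) \<otimes> inv y" using g Hc by (auto simp: inv_mult int_pow_neg)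
    then show "inv a \<in> ?R" using a subgroup.m_inv_closed[OF H] by blast
  next
    fix a b assume "a \<in> ?R" "b \<in> ?R"
    then obtain k y l z where a: "a = g [^] (k::int) \<otimes> y" "y \<in> generate G S"
      and b: "b = g [^] (l::int) \<otimes> z" "z \<in> generate G S" by blast
    have yz: "y \<in> carrier G" "z \<in> carrier G" using a b Hc by auto
    have "a \<otimes> b = g [^] (k + l) \<otimes> (y \<otimes> z)" using a b yz g
      by (simp add: int_pow_mult m_ac)
    then show "a \<otimes> b \<in> ?R" using subgroup.m_closed[OF H a(2) b(2)] by blast
  qed
qed



lemma (in comm_group) tors_gen_finite:
  assumes "finite S" "S \<subseteq> carrier G"
  shows "finite (tors G \<inter> generate G S)"
  using assms
proof (induction S rule: finite_induct)
  case empty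
  then show ?case by (simp add: generate_empty)
next
  case (insert g S)
  have g: "g \<in> carrier G" and S: "S \<subseteq> carrier G" using insert.prems by auto
  define H where "H = generate G S"
  have Hs: "subgroup H G" unfolding H_def by (rule generate_is_subgroup[OF S])
  have Hc: "H \<subseteq> carrier G" using Hs subgroup.subset by blast
  have IH: "finite (tors G \<inter> H)" using insert.IH S unfolding H_def by blast
  have W: "generate G (insert g S) \<subseteq> {g [^] (k::int) \<otimes> y | k y. y \<in> H}"
    unfolding H_def by (rule gen_insert[OF g S])
  have T: "subgroup (tors G) G" by (rule tors_subgroup)
  show ?case
  proof (cases "\<exists>m::nat. m > 0 \<and> g [^] m \<in> H")
    case True
    then obtain m :: nat where m: "m > 0" "g [^] m \<in> H" by blast
    define F where "F r = {x \<in> tors G. \<exists>y\<in>H. x = g [^] (r::nat) \<otimes> y}" for r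
    have sub: "tors G \<inter> generate G (insert g S) \<subseteq> (\<Union>r\<in>{..<m}. F r)"
    proof
      fix x assume x: "x \<in> tors G \<inter> generate G (insert g S)"
      then obtain k y where k: "x = g [^] (k::int) \<otimes> y" "y \<in> H" using W by blast
      define q where "q = k div int m"
      define r where "r = k mod int m"
      have r0: "r \<ge> 0" "r < int m" unfolding r_def using m by auto
      have kqr: "k = int m * q + r" unfolding q_def r_def by simp
      have gm: "g [^] (int m) \<in> H" using m by (simp add: int_pow_int)
      have gq: "(g [^] (int m)) [^] q \<in> H" using subgroup_int_pow_closed[OF Hs gm] .
      define P where "P = (g [^] (int m)) [^] q"
      have Pc: "P \<in> carrier G" using gq Hc unfolding P_def by blast
      have yc: "y \<in> carrier G" using k(2) Hc by blast
      have "g [^] k = P \<otimes> g [^] r"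
        using g unfolding P_def by (simp add: kqr int_pow_mult int_pow_pow)
      also have "\<dots> = g [^] r \<otimes> P" using Pc g by (simp add: m_comm)
      finally have gk: "g [^] k = g [^] r \<otimes> P" .
      have "x = g [^] (nat r) \<otimes> (P \<otimes> y)"
        using k(1) gk g Pc yc r0 by (simp add: pow_nat m_assoc)
      moreover have "P \<otimes> y \<in> H"
        using subgroup.m_closed[OF Hs gq k(2)] unfolding P_def .
      ultimately have "x \<in> F (nat r)" using x unfolding F_def by (intro CollectI conjI bexI) auto
      moreover have "nat r \<in> {..<m}" using r0 by auto
      ultimately show "x \<in> (\<Union>r\<in>{..<m}. F r)" by blast
    qed
    have finF: "finite (F r)" for r
    proof (cases "F r = {}")
      case False
      then obtain x0 where "x0 \<in> F r" by blast
      then have "x0 \<in> tors G" "\<exists>y\<in>H. x0 = g [^] r \<otimes> y" unfolding F_def by simp_all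
      then obtain y0 where x0: "x0 \<in> tors G" "y0 \<in> H" "x0 = g [^] r \<otimes> y0" by auto
      have x0c: "x0 \<in> carrier G" using subsetD[OF tors_carrier x0(1)] .
      have "F r \<subseteq> (\<lambda>z. x0 \<otimes> z) ` (tors G \<inter> H)"
      proof
        fix x assume "x \<in> F r"
        then have "x \<in> tors G" "\<exists>y\<in>H. x = g [^] r \<otimes> y" unfolding F_def by simp_all
        then obtain y where x: "x \<in> tors G" "y \<in> H" "x = g [^] r \<otimes> y" by auto
        have xc: "x \<in> carrier G" using subsetD[OF tors_carrier x(1)] .
        have y: "y \<in> carrier G" "y0 \<in> carrier G" using subsetD[OF Hc x(2)] subsetD[OF Hc x0(2)] by auto
        have yy: "y0 \<otimes> (inv y0 \<otimes> y) = y" using y by (simp add: m_assoc[symmetric])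
        have xz: "x = x0 \<otimes> (inv y0 \<otimes> y)" using x(3) x0(3) g y yy by (simp add: m_assoc)
        have "inv x0 \<otimes> x = inv y0 \<otimes> y" unfolding xz using x0c y by (simp add: m_assoc[symmetric])
        moreover have "inv y0 \<otimes> y \<in> H"
          using subgroup.m_closed[OF Hs subgroup.m_inv_closed[OF Hs x0(2)] x(2)] .
        moreover have "inv x0 \<otimes> x \<in> tors G"
          using subgroup.m_closed[OF T subgroup.m_inv_closed[OF T x0(1)] x(1)] .
        ultimately have zin: "inv x0 \<otimes> x \<in> tors G \<inter> H" by simp
        have xe: "x = x0 \<otimes> (inv x0 \<otimes> x)" using xc x0c by (simp add: m_assoc[symmetric])
        show "x \<in> (\<lambda>z. x0 \<otimes> z) ` (tors G \<inter> H)"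
          by (rule image_eqI[where f="\<lambda>z. x0 \<otimes> z" and x="inv x0 \<otimes> x", OF xe zin])
      qed
      then show ?thesis by (rule finite_surj[OF IH])
    qed simp
    show ?thesis by (rule finite_subset[OF sub finite_UN_I[OF finite_lessThan finF]])
  next
    case False
    have "tors G \<inter> generate G (insert g S) \<subseteq> tors G \<inter> H"
    proof
      fix x assume x: "x \<in> tors G \<inter> generate G (insert g S)"
      then obtain k y where k: "x = g [^] (k::int) \<otimes> y" "y \<in> H" using W by blast
      have y: "y \<in> carrier G" using k Hc by auto
      obtain n :: nat where n: "n > 0" "x [^] n = \<one>" using x unfolding tors_def by auto
      have "x [^] (int n) = g [^] (k * int n) \<otimes> y [^] (int n)"
        using g y k by (simp add: int_pow_distrib int_pow_pow)
      then have e: "g [^] (k * int n) \<otimes> y [^] (int n) = \<one>" using n by (simp add: int_pow_int)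
      have gj: "g [^] (k * int n) = inv (y [^] (int n))"
        using inv_equality[OF e] g y by auto
      have ginH: "g [^] (k * int n) \<in> H"
        unfolding gj using subgroup.m_inv_closed[OF Hs subgroup_int_pow_closed[OF Hs k(2)]] .
      have "k = 0"
      proof (rule ccontr)
        assume "k \<noteq> 0"
        then have j: "k * int n \<noteq> 0" using n by simp
        show False
        proof (cases "k * int n > 0")
          case True
          then have "g [^] (nat (k * int n)) \<in> H" using ginH by (simp add: pow_nat)
          moreover have "nat (k * int n) > 0" using True by simp
          ultimately show False using False by blast
        next
          case False': False
          then have neg: "- (k * int n) > 0" using j by linarith
          have "g [^] (- (k * int n)) \<in> H"
            using subgroup.m_inv_closed[OF Hs ginH] g by (simp add: int_pow_neg)
          then have "g [^] (nat (- (k * int n))) \<in> H" using neg by (simp add: pow_nat)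
          moreover have "nat (- (k * int n)) > 0" using neg by simp
          ultimately show False using False by blast
        qed
      qed
      then show "x \<in> tors G \<inter> H" using x k y by simp
    qed
    then show ?thesis by (rule finite_subset[OF _ IH])
  qed
qed

lemma tors_finite:
  assumes "comm_group G" "fin_gen G"
  shows "finite (tors G)"
proof -
  obtain S where S: "finite S" "S \<subseteq> carrier G" "generate G S = carrier G"
    using assms(2) unfolding fin_gen_def by blast
  have "tors G \<subseteq> tors G \<inter> generate G S" by (simp add: S(3) tors_carrier)
  then show ?thesis by (rule finite_subset[OF _ comm_group.tors_gen_finite[OF assms(1) S(1,2)]])
qed



lemma hom_tors:
  assumes "group G" "group H" "f \<in> hom G H"
  shows "f ` tors G \<subseteq> tors H"
proof
  fix y assume "y \<in> f ` tors G"
  then obtain x where x: "x \<in> tors G" "y = f x" by (rule imageE)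
  then have xc: "x \<in> carrier G" unfolding tors_def by simp
  obtain n :: nat where n: "n > 0" "x [^]\<^bsub>G\<^esub> n = \<one>\<^bsub>G\<^esub>" using x(1) unfolding tors_def by auto
  have fc: "f x \<in> carrier H" using hom_in_carrier[OF assms(3) xc] .
  have "f x [^]\<^bsub>H\<^esub> n = f (x [^]\<^bsub>G\<^esub> n)" using hom_nat_pow[OF assms(3) xc assms(1,2)] by simp
  also have "\<dots> = \<one>\<^bsub>H\<^esub>" using n(2) group_hom.hom_one[of G H f] assms
    by (simp add: group_hom_def group_hom_axioms_def)
  finally have "f x [^]\<^bsub>H\<^esub> n = \<one>\<^bsub>H\<^esub>" .
  then show "y \<in> tors H" unfolding tors_def using fc n(1) x(2) by auto
qed

lemma free_map_coset:
  assumes A: "comm_group A" and B: "comm_group B" and hom: "\<phi> \<in> hom A B"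
    and a: "a \<in> carrier A"
  shows "free_map A B \<phi> (tors A #>\<^bsub>A\<^esub> a) = tors B #>\<^bsub>B\<^esub> \<phi> a"
proof -
  interpret A: comm_group A by (rule A)
  interpret B: comm_group B by (rule B)
  have TA: "subgroup (tors A) A" by (rule A.tors_subgroup)
  have TB: "subgroup (tors B) B" by (rule B.tors_subgroup)
  have fa: "\<phi> a \<in> carrier B" using hom_in_carrier[OF hom a] .
  have each: "tors B #>\<^bsub>B\<^esub> \<phi> y = tors B #>\<^bsub>B\<^esub> \<phi> a" if y: "y \<in> tors A #>\<^bsub>A\<^esub> a" for y
  proof -
    obtain t where t: "t \<in> tors A" "y = t \<otimes>\<^bsub>A\<^esub> a" using y unfolding r_coset_def by auto
    have tc: "t \<in> carrier A" using subsetD[OF tors_carrier t(1)] .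
    have ft: "\<phi> t \<in> tors B" using hom_tors[OF A.is_group B.is_group hom] t(1) by blast
    have ftc: "\<phi> t \<in> carrier B" using subsetD[OF tors_carrier ft] .
    have "\<phi> y = \<phi> t \<otimes>\<^bsub>B\<^esub> \<phi> a" using t(2) hom_mult[OF hom tc a] by simp
    then have "tors B #>\<^bsub>B\<^esub> \<phi> y = (tors B #>\<^bsub>B\<^esub> \<phi> t) #>\<^bsub>B\<^esub> \<phi> a"
      using B.coset_mult_assoc[OF tors_carrier ftc fa] by simp
    also have "tors B #>\<^bsub>B\<^esub> \<phi> t = tors B"
      using subgroup.rcos_const[OF TB B.is_group ft] .
    finally show ?thesis .
  qed
  have ain: "a \<in> tors A #>\<^bsub>A\<^esub> a" using A.rcos_self[OF a TA] .
  show ?thesis unfolding free_map_def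
  proof
    show "\<Union> ((\<lambda>y. tors B #>\<^bsub>B\<^esub> \<phi> y) ` (tors A #>\<^bsub>A\<^esub> a)) \<subseteq> tors B #>\<^bsub>B\<^esub> \<phi> a"
      using each by (intro Union_least) (auto simp del: )
    show "tors B #>\<^bsub>B\<^esub> \<phi> a \<subseteq> \<Union> ((\<lambda>y. tors B #>\<^bsub>B\<^esub> \<phi> y) ` (tors A #>\<^bsub>A\<^esub> a))"
      by (rule Union_upper, rule image_eqI[where x=a]) (simp_all add: ain)
  qed
qed

theorem lemma4p1:
  fixes A :: "('a, 'ma) monoid_scheme" and B :: "('b, 'mb) monoid_scheme"
    and C :: "('c, 'mc) monoid_scheme" and D :: "('d, 'md) monoid_scheme"
    and \<phi> :: "'a \<Rightarrow> 'b" and \<psi> :: "'b \<Rightarrow> 'c" and \<chi> :: "'c \<Rightarrow> 'd"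
  assumes "comm_group A" "comm_group B" "comm_group C" "comm_group D"
    and "fin_gen A" "fin_gen B" "fin_gen C" "fin_gen D"
    and "\<phi> \<in> hom A B" "\<psi> \<in> hom B C" "\<chi> \<in> hom C D"
    and "kernel B C \<psi> = \<phi> ` carrier A"
    and "kernel C D \<chi> = \<psi> ` carrier B"
  shows "card (tors C)
           \<le> card (tors (coker (free_part A) (free_part B) (free_map A B \<phi>))) * card (tors B) * card (tors D)"
proof (cases "finite (tors C)")
  case False
  then show ?thesis by simp
next
  case finC: True
  interpret A: comm_group A by fact
  interpret B: comm_group B by fact
  interpret C: comm_group C by fact
  interpret D: comm_group D by fact
  note homphi = \<open>\<phi> \<in> hom A B\<close> and hompsi = \<open>\<psi> \<in> hom B C\<close> and homchi = \<open>\<chi> \<in> hom C D\<close>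
  note kpsi = \<open>kernel B C \<psi> = \<phi> ` carrier A\<close> and kchi = \<open>kernel C D \<chi> = \<psi> ` carrier B\<close>
  interpret phi: group_hom A B \<phi> by (rule group_hom.intro[OF A.is_group B.is_group]) (simp add: group_hom_axioms_def homphi)
  interpret psi: group_hom B C \<psi> by (rule group_hom.intro[OF B.is_group C.is_group]) (simp add: group_hom_axioms_def hompsi)
  interpret chi: group_hom C D \<chi> by (rule group_hom.intro[OF C.is_group D.is_group]) (simp add: group_hom_axioms_def homchi)
  define TB where "TB = tors B"
  define FB where "FB = free_part B"
  have TBsub: "subgroup TB B" unfolding TB_def by (rule B.tors_subgroup)
  have TBn: "TB \<lhd> B" using B.subgroup_imp_normal[OF TBsub] .
  have FBdef: "FB = B Mod TB" unfolding FB_def TB_def free_part_def ..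
  have FBc: "comm_group FB" unfolding FBdef by (rule B.abelian_FactGroup[OF TBsub])
  interpret FB: comm_group FB by (rule FBc)
  define q1 where "q1 = (\<lambda>b. TB #>\<^bsub>B\<^esub> b)"
  have q1hom: "q1 \<in> hom B FB" unfolding q1_def FBdef by (rule normal.r_coset_hom_Mod[OF TBn])
  interpret q1: group_hom B FB q1 by (rule group_hom.intro[OF B.is_group FB.is_group]) (simp add: group_hom_axioms_def q1hom)
  define N where "N = free_map A B \<phi> ` carrier (free_part A)"
  have Neq: "N = q1 ` (\<phi> ` carrier A)"
  proof -
    have "carrier (free_part A) = (\<lambda>a. tors A #>\<^bsub>A\<^esub> a) ` carrier A"
      unfolding free_part_def by (rule carrier_FactGroup)
    then have "N = (\<lambda>a. free_map A B \<phi> (tors A #>\<^bsub>A\<^esub> a)) ` carrier A"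
      unfolding N_def by (simp add: image_image)
    also have "\<dots> = (\<lambda>a. q1 (\<phi> a)) ` carrier A"
      by (rule image_cong[OF refl]) (simp add: q1_def TB_def free_map_coset[OF \<open>comm_group A\<close> \<open>comm_group B\<close> homphi])
    finally show ?thesis by (simp add: image_image)
  qed
  have Nsub: "subgroup N FB" unfolding Neq by (rule q1.subgroup_img_is_subgroup[OF phi.img_is_subgroup])
  have Nn: "N \<lhd> FB" using FB.subgroup_imp_normal[OF Nsub] .
  define Q where "Q = coker (free_part A) (free_part B) (free_map A B \<phi>)"
  have Qdef: "Q = FB Mod N" unfolding Q_def coker_def FB_def N_def ..
  have Qc: "comm_group Q" unfolding Qdef by (rule FB.abelian_FactGroup[OF Nsub])
  interpret Q: comm_group Q by (rule Qc)
  define q2 where "q2 = (\<lambda>Y. N #>\<^bsub>FB\<^esub> Y)"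
  have q2hom: "q2 \<in> hom FB Q" unfolding q2_def Qdef by (rule normal.r_coset_hom_Mod[OF Nn])
  define pi where "pi = (\<lambda>b. q2 (q1 b))"
  have pihom: "pi \<in> hom B Q"
  proof (rule homI)
    fix x assume "x \<in> carrier B"
    then show "pi x \<in> carrier Q" unfolding pi_def
      using hom_in_carrier[OF q2hom hom_in_carrier[OF q1hom]] by blast
  next
    fix x y assume xy: "x \<in> carrier B" "y \<in> carrier B"
    show "pi (x \<otimes>\<^bsub>B\<^esub> y) = pi x \<otimes>\<^bsub>Q\<^esub> pi y" unfolding pi_def
      using xy hom_mult[OF q1hom xy] hom_mult[OF q2hom hom_in_carrier[OF q1hom xy(1)] hom_in_carrier[OF q1hom xy(2)]]
      by simp
  qed
  interpret pi: group_hom B Q pi by (rule group_hom.intro[OF B.is_group Q.is_group]) (simp add: group_hom_axioms_def pihom)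
  have pisurj: "carrier Q = pi ` carrier B"
  proof -
    have "carrier Q = q2 ` carrier FB" unfolding Qdef q2_def by (rule carrier_FactGroup)
    also have "carrier FB = q1 ` carrier B" unfolding FBdef q1_def by (rule carrier_FactGroup)
    finally show ?thesis unfolding pi_def by (simp add: image_image)
  qed
  have pi_phi: "pi (\<phi> a) = \<one>\<^bsub>Q\<^esub>" if a: "a \<in> carrier A" for a
  proof -
    have "q1 (\<phi> a) \<in> N" unfolding Neq using a by blast
    then have "N #>\<^bsub>FB\<^esub> q1 (\<phi> a) = N" using subgroup.rcos_const[OF Nsub FB.is_group] by blast
    then show ?thesis unfolding pi_def q2_def Qdef by simp
  qed
  have pi_ker: "\<exists>t\<in>TB. \<exists>a\<in>carrier A. b = t \<otimes>\<^bsub>B\<^esub> \<phi> a"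
    if b: "b \<in> carrier B" and pb: "pi b = \<one>\<^bsub>Q\<^esub>" for b
  proof -
    have Xc: "q1 b \<in> carrier FB" using hom_in_carrier[OF q1hom b] .
    have "q1 b \<in> N #>\<^bsub>FB\<^esub> q1 b" using FB.rcos_self[OF Xc Nsub] .
    also have "N #>\<^bsub>FB\<^esub> q1 b = N" using pb unfolding pi_def q2_def Qdef by simp
    finally have "q1 b \<in> N" .
    then obtain a where a: "a \<in> carrier A" "q1 b = q1 (\<phi> a)" unfolding Neq by blast
    have "b \<in> q1 b" unfolding q1_def using B.rcos_self[OF b TBsub] .
    then have "b \<in> TB #>\<^bsub>B\<^esub> \<phi> a" using a(2) unfolding q1_def by simp
    then obtain t where "t \<in> TB" "b = t \<otimes>\<^bsub>B\<^esub> \<phi> a" unfolding r_coset_def by blast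
    then show ?thesis using a(1) by blast
  qed
  have Qfg: "fin_gen Q"
  proof -
    obtain S where S: "finite S" "S \<subseteq> carrier B" "generate B S = carrier B"
      using \<open>fin_gen B\<close> unfolding fin_gen_def by blast
    have "generate Q (pi ` S) = pi ` generate B S" by (rule pi.generate_img[OF S(2)])
    then have "generate Q (pi ` S) = carrier Q" using S(3) pisurj by simp
    moreover have "pi ` S \<subseteq> carrier Q" using S(2) pisurj by blast
    ultimately show ?thesis unfolding fin_gen_def using S(1) by blast
  qed
  have finQ: "finite (tors Q)" by (rule tors_finite[OF Qc Qfg])
  have finB: "finite TB" unfolding TB_def by (rule tors_finite[OF \<open>comm_group B\<close> \<open>fin_gen B\<close>])
  have finD: "finite (tors D)" by (rule tors_finite[OF \<open>comm_group D\<close> \<open>fin_gen D\<close>])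
  have TCsub: "subgroup (tors C) C" by (rule C.tors_subgroup)
  define K where "K = tors C \<inter> \<psi> ` carrier B"
  have finK: "finite K" unfolding K_def using finC by simp
  have step1: "card (tors C) \<le> card K * card (tors D)"
  proof (rule count_le[OF finD hom_tors[OF C.is_group D.is_group homchi] finK])
    fix x x' assume x: "x \<in> tors C" and x': "x' \<in> tors C" and e: "\<chi> x = \<chi> x'"
    have xc: "x \<in> carrier C" using subsetD[OF tors_carrier x] .
    have xc': "x' \<in> carrier C" using subsetD[OF tors_carrier x'] .
    define z where "z = inv\<^bsub>C\<^esub> x \<otimes>\<^bsub>C\<^esub> x'"
    have zT: "z \<in> tors C" unfolding z_def
      using subgroup.m_closed[OF TCsub subgroup.m_inv_closed[OF TCsub x] x'] .
    have zc: "z \<in> carrier C" unfolding z_def using xc xc' by simp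
    have "\<chi> z = inv\<^bsub>D\<^esub> (\<chi> x) \<otimes>\<^bsub>D\<^esub> \<chi> x'" unfolding z_def using xc xc' by simp
    also have "\<dots> = \<one>\<^bsub>D\<^esub>" using e xc' by simp
    finally have "z \<in> kernel C D \<chi>" unfolding kernel_def using zc by simp
    then have "z \<in> K" unfolding K_def kchi using zT by simp
    moreover have "x' = x \<otimes>\<^bsub>C\<^esub> z" unfolding z_def using xc xc' by (simp add: C.m_assoc[symmetric])
    ultimately show "x' \<in> (\<lambda>zz. x \<otimes>\<^bsub>C\<^esub> zz) ` K" by (rule rev_image_eqI)
  qed
  define beta where "beta c = (SOME b. b \<in> carrier B \<and> \<psi> b = c)" for c
  have beta: "beta c \<in> carrier B \<and> \<psi> (beta c) = c" if "c \<in> K" for c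
  proof -
    from that obtain b where "b \<in> carrier B" "\<psi> b = c" unfolding K_def by blast
    then show ?thesis unfolding beta_def by (rule someI[of "\<lambda>b. b \<in> carrier B \<and> \<psi> b = c", OF conjI])
  qed
  define sigma where "sigma c = pi (beta c)" for c
  have finZ: "finite (\<psi> ` TB)" using finB by simp
  have step2: "card K \<le> card (\<psi> ` TB) * card (tors Q)"
  proof (rule count_le[OF finQ _ finZ])
    show "sigma ` K \<subseteq> tors Q"
    proof
      fix y assume "y \<in> sigma ` K"
      then obtain c where c: "c \<in> K" "y = sigma c" by (rule imageE)
      have bc: "beta c \<in> carrier B" "\<psi> (beta c) = c" using beta[OF c(1)] by auto
      have cT: "c \<in> tors C" using c(1) unfolding K_def by simp
      then obtain n :: nat where n: "n > 0" "c [^]\<^bsub>C\<^esub> n = \<one>\<^bsub>C\<^esub>" unfolding tors_def by auto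
      have "\<psi> (beta c [^]\<^bsub>B\<^esub> n) = \<one>\<^bsub>C\<^esub>" using psi.hom_nat_pow[OF bc(1)] bc(2) n(2) by simp
      then have "beta c [^]\<^bsub>B\<^esub> n \<in> kernel B C \<psi>" unfolding kernel_def using bc(1) by simp
      then obtain a where a: "a \<in> carrier A" "beta c [^]\<^bsub>B\<^esub> n = \<phi> a" unfolding kpsi by blast
      have "pi (beta c) [^]\<^bsub>Q\<^esub> n = pi (beta c [^]\<^bsub>B\<^esub> n)" using pi.hom_nat_pow[OF bc(1)] by simp
      also have "\<dots> = \<one>\<^bsub>Q\<^esub>" using a pi_phi by simp
      finally have "pi (beta c) [^]\<^bsub>Q\<^esub> n = \<one>\<^bsub>Q\<^esub>" .
      moreover have "pi (beta c) \<in> carrier Q" using hom_in_carrier[OF pihom bc(1)] .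
      ultimately show "y \<in> tors Q" unfolding tors_def c(2) sigma_def using n(1) by auto
    qed
  next
    fix c c' assume c: "c \<in> K" and c': "c' \<in> K" and e: "sigma c = sigma c'"
    have bc: "beta c \<in> carrier B" "\<psi> (beta c) = c" using beta[OF c] by auto
    have bc': "beta c' \<in> carrier B" "\<psi> (beta c') = c'" using beta[OF c'] by auto
    define d where "d = inv\<^bsub>B\<^esub> (beta c) \<otimes>\<^bsub>B\<^esub> beta c'"
    have dc: "d \<in> carrier B" unfolding d_def using bc bc' by simp
    have pbc: "pi (beta c) \<in> carrier Q" "pi (beta c') \<in> carrier Q"
      using hom_in_carrier[OF pihom bc(1)] hom_in_carrier[OF pihom bc'(1)] by auto
    have "pi d = inv\<^bsub>Q\<^esub> (pi (beta c)) \<otimes>\<^bsub>Q\<^esub> pi (beta c')" unfolding d_def using bc bc' by simp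
    also have "\<dots> = \<one>\<^bsub>Q\<^esub>" using e pbc unfolding sigma_def by simp
    finally obtain t a where t: "t \<in> TB" "a \<in> carrier A" "d = t \<otimes>\<^bsub>B\<^esub> \<phi> a" using pi_ker[OF dc] by blast
    have tc: "t \<in> carrier B" using TBsub t(1) subgroup.subset by blast
    have fa: "\<phi> a \<in> kernel B C \<psi>" unfolding kpsi using t(2) by blast
    then have "\<psi> (\<phi> a) = \<one>\<^bsub>C\<^esub>" unfolding kernel_def by simp
    then have "\<psi> d = \<psi> t" using t(3) tc t(2) by simp
    moreover have "\<psi> d = inv\<^bsub>C\<^esub> c \<otimes>\<^bsub>C\<^esub> c'" unfolding d_def using bc bc' by simp
    ultimately have e2: "inv\<^bsub>C\<^esub> c \<otimes>\<^bsub>C\<^esub> c' = \<psi> t" by simp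
    have cc: "c \<in> carrier C" "c' \<in> carrier C"
      using hom_in_carrier[OF hompsi bc(1)] hom_in_carrier[OF hompsi bc'(1)] bc(2) bc'(2) by simp_all
    have "c' = c \<otimes>\<^bsub>C\<^esub> (inv\<^bsub>C\<^esub> c \<otimes>\<^bsub>C\<^esub> c')" using cc by (simp add: C.m_assoc[symmetric])
    then have "c' = c \<otimes>\<^bsub>C\<^esub> \<psi> t" unfolding e2 .
    then show "c' \<in> (\<lambda>z. c \<otimes>\<^bsub>C\<^esub> z) ` \<psi> ` TB" by (rule rev_image_eqI[OF imageI[OF t(1)]])
  qed
  have "card (\<psi> ` TB) \<le> card TB" using finB by (rule card_image_le)
  then have "card K \<le> card TB * card (tors Q)" using step2 by (meson le_trans mult_le_mono1)
  then have "card (tors C) \<le> card TB * card (tors Q) * card (tors D)" using step1 by (meson le_trans mult_le_mono1)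
  then show ?thesis unfolding Q_def[symmetric] TB_def by (simp add: ac_simps)
qed


end
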